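(* Let $C\subseteq\mathbb{F}_q^n$ be a perfect code (binary or non-binary) with covering radius $\rho$. Then the set $C(\rho)$ of vectors at distance $\rho$ from $C$ has minimum distance $1$.
   Context: Hamming distance $d$; $d({\bf v},C)=\min_{{\bf x}\in C}d({\bf v},{\bf x})$; covering radius $\rho=\max_{\bf v}d({\bf v},C)$; $C(\rho)=\{{\bf v}\in\mathbb{F}_q^n: d({\bf v},C)=\rho\}$. For a code with minimum distance $d$, the packing radius is $e=\lfloor (d-1)/2\rfloor$; the code is perfect if $e=\rho$. Codes need not be linear. *)

theory Defs
  imports "HOL-Analysis.Finite_Cartesian_Product"
begin

definition hamming :: "'a ^ 'n \<Rightarrow> 'a ^ 'n \<Rightarrow> nat" where
  "hamming x y = card {i. x $ i \<noteq> y $ i}"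

definition dist_code :: "'a ^ 'n \<Rightarrow> ('a ^ 'n) set \<Rightarrow> nat" where
  "dist_code v C = Min {hamming v x | x. x \<in> C}"

definition covering_radius :: "('a ^ 'n::finite) set \<Rightarrow> nat" where
  "covering_radius C = Max {dist_code v C | v. v \<in> (UNIV :: ('a ^ 'n) set)}"

definition at_distance :: "('a ^ 'n) set \<Rightarrow> nat \<Rightarrow> ('a ^ 'n) set" where
  "at_distance C r = {v. dist_code v C = r}"

definition min_distance :: "('a ^ 'n) set \<Rightarrow> nat" where
  "min_distance C = Min {hamming x y | x y. x \<in> C \<and> y \<in> C \<and> x \<noteq> y}"

definition packing_radius :: "('a ^ 'n) set \<Rightarrow> nat" where
  "packing_radius C = (min_distance C - 1) div 2"

definition perfect_code :: "('a ^ 'n::finite) set \<Rightarrow> bool" where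
  "perfect_code C \<longleftrightarrow> packing_radius C = covering_radius C"

end

theory Submission
  imports Defs
begin

lemma ham_le: "hamming (x::'a ^ 'n::finite) y \<le> CARD('n)"
  unfolding hamming_def by (rule card_mono) auto

lemma ham_sym: "hamming x y = hamming y x"
  unfolding hamming_def by (metis (mono_tags))

lemma ham_tri: "hamming (x::'a ^ 'n::finite) z \<le> hamming x y + hamming y z"
proof -
  have "{i. x $ i \<noteq> z $ i} \<subseteq> {i. x $ i \<noteq> y $ i} \<union> {i. y $ i \<noteq> z $ i}" by auto
  hence "card {i. x $ i \<noteq> z $ i} \<le> card ({i. x $ i \<noteq> y $ i} \<union> {i. y $ i \<noteq> z $ i})"
    by (intro card_mono) auto
  also have "\<dots> \<le> card {i. x $ i \<noteq> y $ i} + card {i. y $ i \<noteq> z $ i}" by (rule card_Un_le)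
  finally show ?thesis unfolding hamming_def .
qed

lemma ham_pos: "(x::'a ^ 'n::finite) \<noteq> y \<Longrightarrow> hamming x y \<ge> 1"
proof -
  assume "x \<noteq> y"
  then obtain i where "x $ i \<noteq> y $ i" by (metis vec_eq_iff)
  hence "{i. x $ i \<noteq> y $ i} \<noteq> {}" by auto
  thus ?thesis unfolding hamming_def by (simp add: Suc_leI card_gt_0_iff)
qed

lemma fin_bounded: "finite {hamming (x::'a ^ 'n::finite) y | x y. P x y}"
  by (rule finite_subset[of _ "{..CARD('n)}"]) (auto intro: ham_le)

lemma dist_code_le: "c \<in> C \<Longrightarrow> dist_code (v::'a ^ 'n::finite) C \<le> hamming v c"
  unfolding dist_code_def
  by (rule Min_le) (auto intro!: finite_subset[of _ "{..CARD('n)}"] ham_le)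

lemma dist_code_in: "C \<noteq> {} \<Longrightarrow> \<exists>c\<in>C. dist_code (v::'a ^ 'n::finite) C = hamming v c"
proof -
  assume "C \<noteq> {}"
  have "dist_code v C \<in> {hamming v x | x. x \<in> C}" unfolding dist_code_def
    by (rule Min_in) (use \<open>C \<noteq> {}\<close> in \<open>auto intro!: finite_subset[of _ "{..CARD('n)}"] ham_le\<close>)
  thus ?thesis by auto
qed

lemma min_dist_le: "x \<in> C \<Longrightarrow> y \<in> C \<Longrightarrow> x \<noteq> y \<Longrightarrow> min_distance (C::('a ^ 'n::finite) set) \<le> hamming x y"
  unfolding min_distance_def
  by (rule Min_le) (auto intro!: finite_subset[of _ "{..CARD('n)}"] ham_le)

theorem lemma2p1:
  fixes C :: "('a::{finite,field} ^ 'n::finite) set"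
  assumes "card C \<ge> 2"
    and "perfect_code C"
  shows "min_distance (at_distance C (covering_radius C)) = 1"
proof -
  define \<rho> where "\<rho> = covering_radius C"
  define d where "d = min_distance C"
  have fC: "finite C" using assms(1) by (metis card.infinite not_numeral_le_zero)
  obtain c c2 where cC: "c \<in> C" and c2C: "c2 \<in> C" and cc2: "c \<noteq> c2"
    using assms(1) card_le_Suc0_iff_eq[OF fC] by fastforce
  have "d \<in> {hamming x y | x y. x \<in> C \<and> y \<in> C \<and> x \<noteq> y}"
    unfolding d_def min_distance_def
    by (rule Min_in) (use cC c2C cc2 in \<open>auto intro!: finite_subset[of _ "{..CARD('n)}"] ham_le\<close>)
  then obtain x y :: "'a ^ 'n" where "d = hamming x y" "x \<noteq> y" by auto
  hence d1: "d \<ge> 1" and dn: "d \<le> CARD('n)" using ham_pos ham_le by auto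
  have rho: "\<rho> = (d - 1) div 2" using assms(2)
    unfolding perfect_code_def packing_radius_def \<rho>_def d_def by simp
  have d2: "2 * \<rho> + 1 \<le> d" using rho d1 by linarith
  have rn: "\<rho> < CARD('n)" using d2 dn by linarith
  obtain S :: "'n set" where S: "card S = \<rho>"
    using obtain_subset_with_card_n[of \<rho> "UNIV :: 'n set"] rn by auto
  have "S \<noteq> UNIV" using S rn by auto
  then obtain j where j: "j \<notin> S" by auto
  define v :: "'a ^ 'n" where "v = (\<chi> i. if i \<in> S then c $ i + 1 else c $ i)"
  define w :: "'a ^ 'n" where "w = (\<chi> i. if i \<in> insert j S then c $ i + 1 else c $ i)"
  have "{i. c $ i \<noteq> v $ i} = S" unfolding v_def by auto
  hence hcv: "hamming c v = \<rho>" unfolding hamming_def using S by simp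
  have "{i. c $ i \<noteq> w $ i} = insert j S" unfolding w_def by auto
  hence hcw: "hamming c w = \<rho> + 1" unfolding hamming_def using S j
    by (metis Suc_eq_plus1 card.infinite card_insert_disjoint finite rn less_zeroE)
  have "{i. v $ i \<noteq> w $ i} = {j}" unfolding v_def w_def using j by auto
  hence hvw: "hamming v w = 1" unfolding hamming_def by simp
  have vw: "v \<noteq> w" using hvw unfolding hamming_def by auto
  have lowv: "hamming v c' \<ge> \<rho>" if "c' \<in> C" for c'
  proof (cases "c' = c")
    case True thus ?thesis using hcv ham_sym[of c v] by simp
  next
    case False
    have "d \<le> hamming c c'" using min_dist_le[OF cC that] False d_def by auto
    also have "\<dots> \<le> hamming c v + hamming v c'" by (rule ham_tri)
    finally show ?thesis using hcv d2 by linarith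
  qed
  have loww: "hamming w c' \<ge> \<rho>" if "c' \<in> C" for c'
  proof (cases "c' = c")
    case True thus ?thesis using hcw ham_sym[of c w] by simp
  next
    case False
    have "d \<le> hamming c c'" using min_dist_le[OF cC that] False d_def by auto
    also have "\<dots> \<le> hamming c w + hamming w c'" by (rule ham_tri)
    finally show ?thesis using hcw d2 by linarith
  qed
  have Cne: "C \<noteq> {}" using cC by auto
  have dv: "dist_code v C = \<rho>"
    using dist_code_le[OF cC, of v] hcv ham_sym[of c v] dist_code_in[OF Cne, of v] lowv
    by (metis le_antisym)
  have cov: "dist_code w C \<le> \<rho>" unfolding \<rho>_def covering_radius_def
  proof (rule Max_ge)
    have "{dist_code v C | v. v \<in> (UNIV :: ('a ^ 'n) set)} = (\<lambda>v. dist_code v C) ` UNIV" by auto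
    thus "finite {dist_code v C | v. v \<in> (UNIV :: ('a ^ 'n) set)}" by simp
  qed auto
  have dw: "dist_code w C = \<rho>"
    using cov dist_code_in[OF Cne, of w] loww by (metis le_antisym)
  let ?D = "at_distance C \<rho>"
  have vD: "v \<in> ?D" and wD: "w \<in> ?D" using dv dw unfolding at_distance_def by auto
  have "Min {hamming x y | x y. x \<in> ?D \<and> y \<in> ?D \<and> x \<noteq> y} = 1"
  proof (rule antisym)
    show "Min {hamming x y | x y. x \<in> ?D \<and> y \<in> ?D \<and> x \<noteq> y} \<le> 1"
      using vD wD vw hvw
      by (intro Min_le[THEN order_trans]) (auto intro!: finite_subset[of _ "{..CARD('n)}"] ham_le)
    show "1 \<le> Min {hamming x y | x y. x \<in> ?D \<and> y \<in> ?D \<and> x \<noteq> y}"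
      using vD wD vw
      by (subst Min_ge_iff) (auto intro!: finite_subset[of _ "{..CARD('n)}"] ham_le dest: ham_pos simp del: One_nat_def)
  qed
  thus ?thesis unfolding min_distance_def \<rho>_def .
qed

end
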